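(* Let $(M,d)$ be a separable metric space in which every closed bounded subset is compact. Let $(\Omega,\mathscr{F},\mathbb{P},\theta)$ be an ergodic measure-preserving dynamical system and let $\{f_\omega\}_{\omega\in\Omega}$ be a family of paracontraction maps $f_\omega\colon M\to M$ such that $(\omega,x)\mapsto f_\omega(x)$ is measurable. Let $\varphi(n,\omega,x)=f_{\theta^{n-1}(\omega)}\circ\cdots\circ f_\omega(x)$ be the induced random iteration of maps and let $$C_\varphi=\{x\in M\colon \mathbb{P}(\{\omega\in\Omega\colon f_\omega(x)=x\})=1\}.$$ Assume $C_\varphi\neq\emptyset$. Then for every $x\in M$, for $\mathbb{P}$-almost every $\omega$ the sequence $(\varphi(n,\omega,x))_{n\in\mathbb{N}}$ converges to some point of $C_\varphi$ (depending on $\omega$ and $x$).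
   Context: A continuous map $f\colon M\to M$ is a paracontraction if for every fixed point $x$ of $f$ and every $y$ that is not a fixed point of $f$, $d(f(y),x)<d(y,x)$ (and hence $d(f(y),x)\le d(y,x)$ for all $y$). An ergodic measure-preserving dynamical system $(\Omega,\mathscr{F},\mathbb{P},\theta)$ consists of a probability space and a measurable map $\theta\colon\Omega\to\Omega$ preserving $\mathbb{P}$ such that every $A\in\mathscr{F}$ with $\theta^{-1}(A)\subset A$ has $\mathbb{P}(A)\in\{0,1\}$. $M$ carries its Borel $\sigma$-algebra and $\Omega\times M$ the product $\sigma$-algebra. *)

theory Defs
  imports "HOL-Probability.Probability"
begin

definition paracontraction :: "('b::metric_space \<Rightarrow> 'b) \<Rightarrow> bool" where
  "paracontraction g \<longleftrightarrow> continuous_on UNIV g \<and>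
     (\<forall>x y. g x = x \<and> g y \<noteq> y \<longrightarrow> dist (g y) x < dist y x)"

definition ergodic_mpds :: "'a measure \<Rightarrow> ('a \<Rightarrow> 'a) \<Rightarrow> bool" where
  "ergodic_mpds P \<theta> \<longleftrightarrow> prob_space P \<and> \<theta> \<in> P \<rightarrow>\<^sub>M P \<and> distr P P \<theta> = P \<and>
     (\<forall>A \<in> sets P. \<theta> -` A \<inter> space P \<subseteq> A \<longrightarrow> measure P A = 0 \<or> measure P A = 1)"

primrec rand_iter :: "('a \<Rightarrow> 'b \<Rightarrow> 'b) \<Rightarrow> ('a \<Rightarrow> 'a) \<Rightarrow> nat \<Rightarrow> 'a \<Rightarrow> 'b \<Rightarrow> 'b" where
  "rand_iter f \<theta> 0 \<omega> x = x"
| "rand_iter f \<theta> (Suc n) \<omega> x = f ((\<theta> ^^ n) \<omega>) (rand_iter f \<theta> n \<omega> x)"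

definition common_fixed :: "'a measure \<Rightarrow> ('a \<Rightarrow> 'b \<Rightarrow> 'b) \<Rightarrow> 'b set" where
  "common_fixed P f = {x. measure P {\<omega> \<in> space P. f \<omega> x = x} = 1}"

end

theory Submission
  imports Defs
begin


lemma dense_subset_exists:
  fixes S T :: "'b::metric_space set"
  assumes "countable S" "closure S = UNIV"
  shows "\<exists>D. countable D \<and> D \<subseteq> T \<and> T \<subseteq> closure D"
proof -
  define I where "I = {(s,n::nat). s \<in> S \<and> (\<exists>t\<in>T. dist s t < 1/Suc n)}"
  define pick where "pick = (\<lambda>(s,n::nat). SOME t. t \<in> T \<and> dist s t < 1/Suc n)"
  define D where "D = pick ` I"
  have "countable I"
    by (rule countable_subset[of _ "S \<times> UNIV"]) (auto simp: I_def intro: assms(1))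
  then have "countable D" unfolding D_def by simp
  have pk: "pick i \<in> T \<and> dist (fst i) (pick i) < 1/Suc (snd i)" if iI: "i \<in> I" for i
  proof -
    obtain s n where i: "i = (s,n)" by (cases i)
    then obtain t where t: "t \<in> T" "dist s t < 1/Suc n" using iI unfolding I_def by auto
    show ?thesis unfolding i pick_def
      using someI[of "\<lambda>t. t \<in> T \<and> dist s t < 1/Suc n" t] t by auto
  qed
  have "D \<subseteq> T" using pk unfolding D_def by auto
  moreover have "T \<subseteq> closure D"
  proof
    fix y assume y: "y \<in> T"
    show "y \<in> closure D" unfolding closure_approachable
    proof (intro allI impI)
      fix e :: real assume e: "e > 0"
      obtain n where n: "inverse (of_nat (Suc n)) < e/2" using reals_Archimedean[of "e/2"] e by auto
      have "y \<in> closure S" using assms(2) by simp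
      then obtain s where s: "s \<in> S" "dist s y < 1/Suc n"
        unfolding closure_approachable by (metis of_nat_0_less_iff zero_less_Suc divide_pos_pos zero_less_one)
      have "(s,n) \<in> I" unfolding I_def using s y by auto
      from pk[OF this] have "pick (s,n) \<in> D" "dist s (pick (s,n)) < 1/Suc n"
        unfolding D_def using \<open>(s,n) \<in> I\<close> by auto
      moreover have "dist (pick (s,n)) y \<le> dist s (pick (s,n)) + dist s y"
        by (metis dist_commute dist_triangle)
      ultimately show "\<exists>x'\<in>D. dist x' y < e" using s n
        by (intro bexI[of _ "pick (s,n)"]) (auto simp: inverse_eq_divide)
    qed
  qed
  ultimately show ?thesis using \<open>countable D\<close> by blast
qed

lemma dense_closed_ineq:
  fixes h :: "'b::metric_space \<Rightarrow> real"
  assumes "closure S = UNIV" "open U" "continuous_on UNIV h" "y \<in> U"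
    "\<And>s. s \<in> S \<Longrightarrow> s \<in> U \<Longrightarrow> h s \<le> b"
  shows "h y \<le> b"
proof -
  have "y \<in> closure (U \<inter> S)" using open_Int_closure_subset[OF assms(2), of S] assms(1,4) by auto
  moreover have "closure (U \<inter> S) \<subseteq> {x. h x \<le> b}"
    by (rule closure_minimal) (auto intro: assms(5) closed_Collect_le continuous_on_const assms(3))
  ultimately show ?thesis by auto
qed

locale RI = prob_space P for P :: "'a measure" +
  fixes \<theta> :: "'a \<Rightarrow> 'a" and f :: "'a \<Rightarrow> 'b::metric_space \<Rightarrow> 'b" and S :: "'b set"
  assumes S_count: "countable S" and S_dense: "closure S = UNIV"
    and proper: "\<And>T::'b set. closed T \<Longrightarrow> bounded T \<Longrightarrow> compact T"
    and \<theta>m[measurable]: "\<theta> \<in> P \<rightarrow>\<^sub>M P"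
    and \<theta>p: "distr P P \<theta> = P"
    and erg: "\<forall>A \<in> sets P. \<theta> -` A \<inter> space P \<subseteq> A \<longrightarrow> measure P A = 0 \<or> measure P A = 1"
    and para: "\<And>\<omega>. \<omega> \<in> space P \<Longrightarrow> paracontraction (f \<omega>)"
    and fm: "(\<lambda>(\<omega>, x). f \<omega> x) \<in> P \<Otimes>\<^sub>M borel \<rightarrow>\<^sub>M borel"
begin

lemma \<theta>n_meas[measurable]: "\<theta> ^^ n \<in> P \<rightarrow>\<^sub>M P"
  by (rule measurable_compose_n[OF \<theta>m])

lemma \<theta>n_space: "\<omega> \<in> space P \<Longrightarrow> (\<theta> ^^ n) \<omega> \<in> space P"
  using measurable_space[OF \<theta>n_meas] by blast

lemma \<theta>n_distr: "distr P P (\<theta> ^^ n) = P"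
proof (induction n)
  case 0 then show ?case by (simp add: id_def distr_id)
next
  case (Suc n)
  have "distr P P (\<theta> ^^ Suc n) = distr (distr P P (\<theta> ^^ n)) P \<theta>"
    by (simp add: distr_distr[OF \<theta>m \<theta>n_meas])
  also have "\<dots> = P" using Suc \<theta>p by simp
  finally show ?case .
qed

lemma \<theta>n_prob: "A \<in> sets P \<Longrightarrow> prob ((\<theta> ^^ n) -` A \<inter> space P) = prob A"
  using measure_distr[OF \<theta>n_meas, of A n] \<theta>n_distr[of n] by simp

lemma f_meas: "g \<in> M \<rightarrow>\<^sub>M P \<Longrightarrow> h \<in> M \<rightarrow>\<^sub>M borel \<Longrightarrow> (\<lambda>\<omega>. f (g \<omega>) (h \<omega>)) \<in> M \<rightarrow>\<^sub>M borel"
  using measurable_comp[OF measurable_Pair[of g M P h borel] fm] by (simp add: o_def)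

lemma Y_meas[measurable]: "(\<lambda>\<omega>. rand_iter f \<theta> n \<omega> x) \<in> P \<rightarrow>\<^sub>M borel"
  by (induction n) (auto intro!: f_meas)

lemma fw_meas[measurable]: "(\<lambda>\<omega>. f \<omega> s) \<in> P \<rightarrow>\<^sub>M borel"
  by (rule f_meas) auto

lemma cont_comp_meas: "continuous_on UNIV (h::'b \<Rightarrow> real) \<Longrightarrow> g \<in> M \<rightarrow>\<^sub>M borel \<Longrightarrow> (\<lambda>\<omega>. h (g \<omega>)) \<in> borel_measurable M"
  using measurable_comp[OF _ borel_measurable_continuous_onI, of g M h] by (simp add: o_def)

lemma dist_Y_meas[measurable]: "(\<lambda>\<omega>. dist (rand_iter f \<theta> n \<omega> x) q) \<in> borel_measurable P"
  by (rule cont_comp_meas[where h="\<lambda>y. dist y q"]) (auto intro: continuous_intros)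

lemma dist_Y_meas'[measurable]: "(\<lambda>\<omega>. dist q (rand_iter f \<theta> n \<omega> x)) \<in> borel_measurable P"
  by (rule cont_comp_meas[where h="\<lambda>y. dist q y"]) (auto intro: continuous_intros)

lemma infdist_Y_meas[measurable]: "(\<lambda>\<omega>. infdist (rand_iter f \<theta> n \<omega> x) A) \<in> borel_measurable P"
  by (rule cont_comp_meas[where h="\<lambda>y. infdist y A"]) (auto intro: continuous_intros continuous_on_infdist)

lemma dist_f_meas[measurable]: "(\<lambda>\<omega>. dist (f \<omega> s) q) \<in> borel_measurable P"
  by (rule cont_comp_meas[where h="\<lambda>y. dist y q"]) (auto intro: continuous_intros)

lemma fix_sets[measurable]: "{\<omega>\<in>space P. f \<omega> q = q} \<in> sets P"
proof -
  have "(\<lambda>\<omega>. f \<omega> q) -` {q} \<inter> space P \<in> sets P"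
    by (rule measurable_sets[OF fw_meas]) (simp add: borel_closed)
  moreover have "(\<lambda>\<omega>. f \<omega> q) -` {q} \<inter> space P = {\<omega>\<in>space P. f \<omega> q = q}" by auto
  ultimately show ?thesis by simp
qed

lemma C_iff: "q \<in> common_fixed P f \<longleftrightarrow> (AE \<omega> in P. f \<omega> q = q)"
  unfolding common_fixed_def using prob_Collect_eq_1[OF fix_sets[of q]] by simp

lemma AE_shift: "(AE \<omega> in P. Q \<omega>) \<Longrightarrow> {\<omega>\<in>space P. Q \<omega>} \<in> sets P \<Longrightarrow> AE \<omega> in P. Q ((\<theta>^^n) \<omega>)"
proof -
  assume a: "AE \<omega> in P. Q \<omega>" "{\<omega>\<in>space P. Q \<omega>} \<in> sets P"
  have "AE \<omega> in distr P P (\<theta>^^n). Q \<omega>" by (subst \<theta>n_distr) (rule a(1))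
  then show ?thesis using AE_distr_iff[OF \<theta>n_meas a(2)] by simp
qed

lemma cont_f: "\<omega> \<in> space P \<Longrightarrow> continuous_on UNIV (f \<omega>)"
  using para unfolding paracontraction_def by blast

lemma C_props: "closed (common_fixed P f) \<and> (AE \<omega> in P. \<forall>n. \<forall>q\<in>common_fixed P f. f ((\<theta>^^n) \<omega>) q = q)"
proof -
  let ?C = "common_fixed P f"
  obtain D where D: "countable D" "D \<subseteq> ?C" "?C \<subseteq> closure D"
    using dense_subset_exists[OF S_count S_dense, of ?C] by blast
  have AEd: "AE \<omega> in P. \<forall>n. \<forall>q\<in>D. f ((\<theta>^^n) \<omega>) q = q"
    unfolding AE_all_countable
  proof
    fix n show "AE \<omega> in P. \<forall>q\<in>D. f ((\<theta>^^n) \<omega>) q = q"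
      unfolding AE_ball_countable[OF D(1)]
    proof
      fix q assume "q \<in> D"
      then have "AE \<omega> in P. f \<omega> q = q" using D(2) C_iff by blast
      then show "AE \<omega> in P. f ((\<theta>^^n) \<omega>) q = q" by (rule AE_shift) (rule fix_sets)
    qed
  qed
  have AEcl: "AE \<omega> in P. \<forall>n. \<forall>q\<in>closure D. f ((\<theta>^^n) \<omega>) q = q"
    using AE_space AEd
  proof eventually_elim
    case (elim \<omega>)
    show ?case
    proof (intro allI ballI)
      fix n q assume q: "q \<in> closure D"
      have "closed {y. f ((\<theta>^^n) \<omega>) y = y}"
        by (rule closed_Collect_eq) (auto intro: cont_f \<theta>n_space elim continuous_on_id)
      moreover have "D \<subseteq> {y. f ((\<theta>^^n) \<omega>) y = y}" using elim by auto
      ultimately have "closure D \<subseteq> {y. f ((\<theta>^^n) \<omega>) y = y}" by (rule closure_minimal[rotated])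
      then show "f ((\<theta>^^n) \<omega>) q = q" using q by auto
    qed
  qed
  have "closure D \<subseteq> ?C"
  proof
    fix q assume q: "q \<in> closure D"
    have "AE \<omega> in P. f \<omega> q = q" using AEcl
      by eventually_elim (use q in \<open>metis funpow_0\<close>)
    then show "q \<in> ?C" using C_iff by blast
  qed
  then have "?C = closure D" using D(3) by blast
  then show ?thesis using AEcl by auto
qed

definition good where
  "good \<omega> \<longleftrightarrow> \<omega> \<in> space P \<and> (\<forall>n. \<forall>q\<in>common_fixed P f. f ((\<theta>^^n) \<omega>) q = q)"

lemma AE_good: "AE \<omega> in P. good \<omega>"
  unfolding good_def by (intro AE_conjI AE_space) (use C_props in blast)

lemma good_step:
  assumes "good \<omega>" "q \<in> common_fixed P f"
  shows "dist (rand_iter f \<theta> (Suc n) \<omega> x) q \<le> dist (rand_iter f \<theta> n \<omega> x) q"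
proof -
  let ?g = "f ((\<theta>^^n) \<omega>)"
  have sp: "(\<theta>^^n) \<omega> \<in> space P" using assms(1) \<theta>n_space good_def by blast
  have pc: "paracontraction ?g" by (rule para[OF sp])
  have fq: "?g q = q" using assms good_def by blast
  show ?thesis
  proof (cases "?g (rand_iter f \<theta> n \<omega> x) = rand_iter f \<theta> n \<omega> x")
    case True then show ?thesis by simp
  next
    case False
    then show ?thesis using pc fq unfolding paracontraction_def by (auto intro: less_imp_le)
  qed
qed

lemma good_mono:
  assumes "good \<omega>" "q \<in> common_fixed P f" "m \<le> n"
  shows "dist (rand_iter f \<theta> n \<omega> x) q \<le> dist (rand_iter f \<theta> m \<omega> x) q"
  by (rule lift_Suc_antimono_le[of "\<lambda>n. dist (rand_iter f \<theta> n \<omega> x) q"]) (use good_step assms in auto)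

end


context RI begin

lemma hitting:
  assumes A: "A \<in> sets P" "prob A > 0" and g: "\<gamma> > 0"
  shows "\<exists>M. prob {\<omega>\<in>space P. \<exists>m<M. (\<theta>^^m) \<omega> \<in> A} \<ge> 1 - \<gamma>"
proof -
  note A(1)[measurable]
  define H where "H M = {\<omega>\<in>space P. \<exists>m<M. (\<theta>^^m) \<omega> \<in> A}" for M
  define H' where "H' = {\<omega>\<in>space P. \<exists>m. (\<theta>^^m) \<omega> \<in> A}"
  have Hs: "H M \<in> sets P" for M unfolding H_def by measurable
  have H's: "H' \<in> sets P" unfolding H'_def by measurable
  have "\<theta> -` H' \<inter> space P \<subseteq> H'"
  proof
    fix \<omega> assume \<omega>: "\<omega> \<in> \<theta> -` H' \<inter> space P"
    then obtain m where "(\<theta>^^m) (\<theta> \<omega>) \<in> A" unfolding H'_def by auto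
    then have "(\<theta>^^Suc m) \<omega> \<in> A" by (simp add: funpow_Suc_right del: funpow.simps)
    then show "\<omega> \<in> H'" using \<omega> unfolding H'_def by blast
  qed
  then have "prob H' = 0 \<or> prob H' = 1" using erg H's by blast
  moreover have "prob A \<le> prob H'"
  proof (rule finite_measure_mono[OF _ H's])
    show "A \<subseteq> H'" unfolding H'_def using sets.sets_into_space[OF A(1)]
      by (auto intro: exI[of _ 0])
  qed
  ultimately have H1: "prob H' = 1" using A(2) by auto
  have "incseq H" unfolding H_def incseq_def by (fastforce intro: less_le_trans)
  moreover have "(\<Union>M. H M) = H'" unfolding H_def H'_def by auto
  ultimately have "(\<lambda>M. prob (H M)) \<longlonglongrightarrow> prob H'"
    using finite_Lim_measure_incseq[of H] Hs by auto
  then have "eventually (\<lambda>M. 1 - \<gamma> < prob (H M)) sequentially"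
    using H1 g by (intro order_tendstoD(1)) auto
  then obtain M where "1 - \<gamma> < prob (H M)" by (auto simp: eventually_sequentially)
  then show ?thesis unfolding H_def by (intro exI[of _ M]) auto
qed

lemma local_dec:
  assumes z: "z \<notin> common_fixed P f" and p: "p \<in> common_fixed P f"
  shows "\<exists>r>0. \<exists>A\<in>sets P. prob A > 0 \<and>
           (\<forall>\<omega>\<in>A. \<forall>y. dist z y < 2*r \<longrightarrow> dist (f \<omega> y) p \<le> dist y p - r)"
proof -
  define A where "A j = {\<omega>\<in>space P. \<forall>s\<in>S. dist z s < 2/Suc j \<longrightarrow> dist (f \<omega> s) p \<le> dist s p - 1/Suc j}" for j :: nat
  have As: "A j \<in> sets P" for j
    unfolding A_def by (intro sets.sets_Collect_countable_All' S_count) measurable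
  have Aall: "dist (f \<omega> y) p \<le> dist y p - 1/Suc j" if \<omega>: "\<omega> \<in> A j" and y: "dist z y < 2/Suc j" for \<omega> y j
  proof -
    have sp: "\<omega> \<in> space P" using \<omega> A_def by auto
    have "(\<lambda>y. dist (f \<omega> y) p - dist y p) y \<le> - (1/Suc j)"
    proof (rule dense_closed_ineq[OF S_dense, of "ball z (2/Suc j)" "\<lambda>y. dist (f \<omega> y) p - dist y p"])
      show "continuous_on UNIV (\<lambda>y. dist (f \<omega> y) p - dist y p)"
        using cont_f[OF sp] by (intro continuous_intros) auto
    qed (use y \<omega> in \<open>auto simp: A_def\<close>)
    then show ?thesis by simp
  qed
  define U where "U = {\<omega>\<in>space P. f \<omega> z \<noteq> z}"
  define F where "F = {\<omega>\<in>space P. f \<omega> p = p}"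
  have Us: "U \<in> sets P" unfolding U_def by measurable
  have Fs: "F \<in> sets P" unfolding F_def by measurable
  have "prob {\<omega>\<in>space P. f \<omega> z = z} \<noteq> 1" using z unfolding common_fixed_def by auto
  moreover have "U = space P - {\<omega>\<in>space P. f \<omega> z = z}" unfolding U_def by auto
  moreover have "prob {\<omega>\<in>space P. f \<omega> z = z} \<le> 1" by (rule prob_le_1)
  ultimately have PU: "prob U > 0" using prob_compl[OF fix_sets[of z]] by (simp add: order_less_le)
  have PF: "prob F = 1" using p unfolding common_fixed_def F_def by simp
  have UF: "U \<inter> F \<subseteq> (\<Union>j. A j)"
  proof
    fix \<omega> assume \<omega>: "\<omega> \<in> U \<inter> F"
    then have sp: "\<omega> \<in> space P" and mz: "f \<omega> z \<noteq> z" and fp: "f \<omega> p = p" unfolding U_def F_def by auto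
    have pc: "paracontraction (f \<omega>)" by (rule para[OF sp])
    define g where "g = dist z p - dist (f \<omega> z) p"
    have g: "g > 0" using pc fp mz unfolding paracontraction_def g_def by auto
    have "isCont (f \<omega>) z" using cont_f[OF sp] continuous_on_eq_continuous_at open_UNIV by blast
    then obtain d where d: "d > 0" "\<And>y. dist y z < d \<Longrightarrow> dist (f \<omega> y) (f \<omega> z) < g/4"
      unfolding continuous_at_eps_delta using g by (metis zero_less_divide_iff zero_less_numeral)
    obtain j where j: "inverse (of_nat (Suc j)) < min (d/2) (g/8)"
      using reals_Archimedean[of "min (d/2) (g/8)"] d g by auto
    have "\<omega> \<in> A j" unfolding A_def
    proof (intro CollectI conjI sp ballI impI)
      fix s assume "s \<in> S" "dist z s < 2/Suc j"
      then have s1: "dist s z < d" and s2: "dist z s < g/4" using j by (auto simp: inverse_eq_divide dist_commute)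
      have "dist (f \<omega> s) p \<le> dist (f \<omega> s) (f \<omega> z) + dist (f \<omega> z) p" by (rule dist_triangle)
      moreover have "dist z p \<le> dist z s + dist s p" by (rule dist_triangle)
      ultimately have "dist (f \<omega> s) p < dist s p - g/2"
        using d(2)[OF s1] s2 g g_def by linarith
      moreover have "1/Suc j < g/8" using j by (auto simp: inverse_eq_divide)
      ultimately show "dist (f \<omega> s) p \<le> dist s p - 1/Suc j"
        using g by linarith
    qed
    then show "\<omega> \<in> (\<Union>j. A j)" by blast
  qed
  have "\<exists>j. prob (A j) > 0"
  proof (rule ccontr)
    assume "\<not> ?thesis"
    then have A0: "prob (A j) = 0" for j using measure_nonneg[of P "A j"] by (meson not_less order.antisym)
    have "prob (\<Union>j. A j) \<le> (\<Sum>j. prob (A j))"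
      by (rule finite_measure_subadditive_countably) (use As A0 in auto)
    then have "prob (\<Union>j. A j) \<le> 0" using A0 by simp
    moreover have "prob (U \<inter> F) \<le> prob (\<Union>j. A j)"
      using UF As by (intro finite_measure_mono) auto
    moreover have "prob U \<le> prob (U \<inter> F) + prob (space P - F)"
    proof -
      have "U \<subseteq> (U \<inter> F) \<union> (space P - F)" using Us sets.sets_into_space by auto
      then have "prob U \<le> prob ((U \<inter> F) \<union> (space P - F))"
        using Us Fs by (intro finite_measure_mono) auto
      also have "\<dots> \<le> prob (U \<inter> F) + prob (space P - F)"
        using Us Fs by (intro measure_Un_le) auto
      finally show ?thesis .
    qed
    moreover have "prob (space P - F) = 0" using prob_compl[OF Fs] PF by simp
    ultimately show False using PU by linarith
  qed
  then obtain j where j: "prob (A j) > 0" by blast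
  show ?thesis
    by (rule exI[of _ "1/Suc j"], simp, rule bexI[of _ "A j"]) (use j Aall As in \<open>auto simp: field_simps\<close>)
qed

lemma disp_unif:
  assumes p: "p \<in> common_fixed P f" and \<tau>: "\<tau> > 0" and \<beta>: "\<beta> > 0"
  shows "\<exists>d>0. \<exists>Q\<in>sets P. prob Q \<ge> 1 - \<beta> \<and>
     (\<forall>\<omega>\<in>Q. \<forall>y. dist y p \<le> R \<longrightarrow> dist y p - dist (f \<omega> y) p < d \<longrightarrow> dist (f \<omega> y) y < \<tau>)"
proof -
  define Q where "Q i = {\<omega>\<in>space P. \<forall>s\<in>S. dist s p < R+1 \<longrightarrow> dist s p - dist (f \<omega> s) p < 1/Suc i
                    \<longrightarrow> dist (f \<omega> s) s \<le> \<tau>/2}" for i :: nat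
  have Qs: "Q i \<in> sets P" for i
    unfolding Q_def by (intro sets.sets_Collect_countable_All' S_count) measurable
  have Qall: "dist (f \<omega> y) y \<le> \<tau>/2"
    if \<omega>: "\<omega> \<in> Q i" and y: "dist y p \<le> R" "dist y p - dist (f \<omega> y) p < 1/Suc i" for \<omega> y i
  proof -
    have sp: "\<omega> \<in> space P" using \<omega> Q_def by auto
    note cf = cont_f[OF sp]
    show ?thesis
    proof (rule dense_closed_ineq[OF S_dense, of "{y. dist y p < R+1 \<and> dist y p - dist (f \<omega> y) p < 1/Suc i}" "\<lambda>y. dist (f \<omega> y) y"])
      show "open {y. dist y p < R+1 \<and> dist y p - dist (f \<omega> y) p < 1/Suc i}"
        by (intro open_Collect_conj open_Collect_less continuous_intros cf) 
      show "continuous_on UNIV (\<lambda>y. dist (f \<omega> y) y)"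
        using cf by (intro continuous_intros) auto
    qed (use y \<omega> in \<open>auto simp: Q_def\<close>)
  qed
  have inQ: "\<exists>i. \<omega> \<in> Q i" if sp: "\<omega> \<in> space P" and fp: "f \<omega> p = p" for \<omega>
  proof -
    note cf = cont_f[OF sp]
    have pc: "paracontraction (f \<omega>)" by (rule para[OF sp])
    define Fs where "Fs = {y. dist y p \<le> R+1 \<and> \<tau>/2 \<le> dist (f \<omega> y) y}"
    have "closed Fs" unfolding Fs_def
      by (intro closed_Collect_conj closed_Collect_le continuous_intros cf)
    moreover have "bounded Fs" 
      by (rule bounded_subset[OF bounded_cball[of p "R+1"]]) (auto simp: Fs_def dist_commute)
    ultimately have cF: "compact Fs" by (rule proper)
    have "\<exists>i. \<forall>y\<in>Fs. 1/Suc i \<le> dist y p - dist (f \<omega> y) p"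
    proof (cases "Fs = {}")
      case True then show ?thesis by auto
    next
      case False
      have "continuous_on Fs (\<lambda>y. dist y p - dist (f \<omega> y) p)"
        using continuous_on_subset[OF cf] by (intro continuous_intros) auto
      then obtain y0 where y0: "y0 \<in> Fs" "\<And>y. y \<in> Fs \<Longrightarrow> dist y0 p - dist (f \<omega> y0) p \<le> dist y p - dist (f \<omega> y) p"
        using continuous_attains_inf[OF cF False] by blast
      have "f \<omega> y0 \<noteq> y0" using y0(1) \<tau> unfolding Fs_def by auto
      then have pos: "dist y0 p - dist (f \<omega> y0) p > 0" using pc fp unfolding paracontraction_def by auto
      obtain i where i: "inverse (of_nat (Suc i)) < dist y0 p - dist (f \<omega> y0) p"
        using reals_Archimedean[OF pos] by blast
      show ?thesis using i y0(2) by (intro exI[of _ i]) (force simp: inverse_eq_divide)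
    qed
    then obtain i where i: "\<And>y. y \<in> Fs \<Longrightarrow> 1/Suc i \<le> dist y p - dist (f \<omega> y) p" by blast
    have "\<omega> \<in> Q i" unfolding Q_def
    proof (intro CollectI conjI sp ballI impI)
      fix s assume s: "s \<in> S" "dist s p < R + 1" "dist s p - dist (f \<omega> s) p < 1/Suc i"
      show "dist (f \<omega> s) s \<le> \<tau>/2"
      proof (rule ccontr)
        assume "\<not> ?thesis"
        then have "s \<in> Fs" using s unfolding Fs_def by auto
        then show False using i s(3) by fastforce
      qed
    qed
    then show ?thesis by blast
  qed
  have "incseq Q"
  proof (rule incseq_SucI, rule subsetI)
    fix i \<omega> assume "\<omega> \<in> Q i"
    moreover have "1 / real (Suc (Suc i)) \<le> 1 / Suc i" by (simp add: frac_le)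
    ultimately show "\<omega> \<in> Q (Suc i)" unfolding Q_def by force
  qed
  then have lim: "(\<lambda>i. prob (Q i)) \<longlonglongrightarrow> prob (\<Union>i. Q i)"
    using finite_Lim_measure_incseq[of Q] Qs by auto
  have "prob {\<omega>\<in>space P. f \<omega> p = p} \<le> prob (\<Union>i. Q i)"
    using inQ Qs by (intro finite_measure_mono) auto
  moreover have "prob {\<omega>\<in>space P. f \<omega> p = p} = 1" using p unfolding common_fixed_def by simp
  ultimately have "prob (\<Union>i. Q i) = 1" using prob_le_1 by (metis order.antisym)
  then have "eventually (\<lambda>i. 1 - \<beta> < prob (Q i)) sequentially"
    using lim \<beta> by (intro order_tendstoD(1)) auto
  then obtain i where i: "1 - \<beta> < prob (Q i)" by (auto simp: eventually_sequentially)
  show ?thesis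
  proof (intro exI[of _ "1/Suc i"] conjI bexI[of _ "Q i"] ballI allI impI)
    fix \<omega> y assume "\<omega> \<in> Q i" "dist y p \<le> R" "dist y p - dist (f \<omega> y) p < 1/Suc i"
    then show "dist (f \<omega> y) y < \<tau>" using Qall \<tau> by fastforce
  qed (use i Qs in auto)
qed

lemma int_ind: "A \<in> sets P \<Longrightarrow> (\<integral>\<omega>. indicator A \<omega> \<partial>P) = prob A"
  by (simp add: Int_absorb2 sets.sets_into_space)

lemma int_ind_int[simp, intro]: "A \<in> sets P \<Longrightarrow> integrable P (indicator A :: 'a \<Rightarrow> real)"
  by (rule integrable_real_indicator) (auto simp: less_top[symmetric])

lemma prob_le_sum_AE:
  assumes "finite I" "A \<in> sets P" "\<And>i. i \<in> I \<Longrightarrow> B i \<in> sets P"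
    and "AE \<omega> in P. indicator A \<omega> \<le> (\<Sum>i\<in>I. indicator (B i) \<omega> :: real)"
  shows "prob A \<le> (\<Sum>i\<in>I. prob (B i))"
proof -
  have "prob A = (\<integral>\<omega>. indicator A \<omega> \<partial>P)" using int_ind assms(2) by simp
  also have "\<dots> \<le> (\<integral>\<omega>. (\<Sum>i\<in>I. indicator (B i) \<omega> :: real) \<partial>P)"
    using assms by (intro integral_mono_AE) (auto intro!: Bochner_Integration.integrable_sum)
  also have "\<dots> = (\<Sum>i\<in>I. prob (B i))"
    using assms by (subst Bochner_Integration.integral_sum) (auto simp: int_ind)
  finally show ?thesis .
qed

lemma count_bound:
  assumes G: "\<And>n. G n \<in> sets P" and e: "e > 0"
    and AEb: "AE \<omega> in P. e * (\<Sum>n<N. indicator (G n) \<omega>) \<le> B"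
  shows "(\<Sum>n<N. prob (G n)) \<le> B / e"
proof -
  have "e * (\<Sum>n<N. prob (G n)) = e * (\<integral>\<omega>. (\<Sum>n<N. indicator (G n) \<omega> :: real) \<partial>P)"
    using G by (subst Bochner_Integration.integral_sum) (auto simp: int_ind)
  also have "\<dots> = (\<integral>\<omega>. e * (\<Sum>n<N. indicator (G n) \<omega> :: real) \<partial>P)" by simp
  also have "\<dots> \<le> (\<integral>\<omega>. B \<partial>P)"
    using G AEb by (intro integral_mono_AE) auto
  also have "\<dots> = B" by (simp add: prob_space)
  finally show ?thesis using e by (simp add: pos_le_divide_eq mult.commute)
qed

end


context RI begin

lemma main_zero:
  assumes p: "p \<in> common_fixed P f" and \<eta>: "\<eta> > 0"
  shows "prob {\<omega>\<in>space P. \<forall>n. \<eta> \<le> infdist (rand_iter f \<theta> n \<omega> x) (common_fixed P f)} = 0"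
proof (rule ccontr)
  let ?C = "common_fixed P f"
  define Y where "Y n \<omega> = rand_iter f \<theta> n \<omega> x" for n \<omega>
  define E where "E = {\<omega>\<in>space P. \<forall>n. \<eta> \<le> infdist (Y n \<omega>) ?C}"
  have Es: "E \<in> sets P" unfolding E_def Y_def by measurable
  assume "prob {\<omega>\<in>space P. \<forall>n. \<eta> \<le> infdist (rand_iter f \<theta> n \<omega> x) ?C} \<noteq> 0"
  then have "prob E \<noteq> 0" unfolding E_def Y_def .
  define c where "c = prob E"
  have c: "c > 0" using \<open>prob E \<noteq> 0\<close> measure_nonneg[of P E] unfolding c_def by linarith
  define R where "R = dist x p"
  have YR: "dist (Y n \<omega>) p \<le> R" if "good \<omega>" for \<omega> n
    using good_mono[OF that p, of 0 n x] by (simp add: Y_def R_def)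
  have Ydec: "dist (Y n \<omega>) p \<le> dist (Y m \<omega>) p" if "good \<omega>" "m \<le> n" for \<omega> m n
    using good_mono[OF that(1) p that(2)] by (simp add: Y_def)
  have YSuc: "Y (Suc n) \<omega> = f ((\<theta>^^n) \<omega>) (Y n \<omega>)" for n \<omega> by (simp add: Y_def)
  define K where "K = {y. dist y p \<le> R \<and> \<eta> \<le> infdist y ?C}"
  have Kc: "compact K"
  proof (rule proper)
    show "closed K" unfolding K_def
      by (intro closed_Collect_conj closed_Collect_le continuous_intros continuous_on_infdist continuous_on_id)
    show "bounded K" by (rule bounded_subset[OF bounded_cball[of p R]]) (auto simp: K_def dist_commute)
  qed
  have Knot: "z \<notin> ?C" if "z \<in> K" for z using that \<eta> infdist_zero[of z ?C] unfolding K_def by auto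
  have "\<forall>z\<in>K. \<exists>r>0. \<exists>A\<in>sets P. prob A > 0 \<and>
           (\<forall>\<omega>\<in>A. \<forall>y. dist z y < 2*r \<longrightarrow> dist (f \<omega> y) p \<le> dist y p - r)"
    using local_dec[OF _ p] Knot by blast
  from bchoice[OF this] obtain r where r: "\<forall>z\<in>K. r z > 0 \<and> (\<exists>A\<in>sets P. prob A > 0 \<and>
           (\<forall>\<omega>\<in>A. \<forall>y. dist z y < 2*r z \<longrightarrow> dist (f \<omega> y) p \<le> dist y p - r z))" by blast
  then have "\<forall>z\<in>K. \<exists>A. A \<in> sets P \<and> prob A > 0 \<and>
           (\<forall>\<omega>\<in>A. \<forall>y. dist z y < 2*r z \<longrightarrow> dist (f \<omega> y) p \<le> dist y p - r z)" by blast
  from bchoice[OF this] obtain A where A: "\<forall>z\<in>K. A z \<in> sets P \<and> prob (A z) > 0 \<and>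
           (\<forall>\<omega>\<in>A z. \<forall>y. dist z y < 2*r z \<longrightarrow> dist (f \<omega> y) p \<le> dist y p - r z)" by blast
  have "\<exists>Z. Z \<subseteq> K \<and> finite Z \<and> K \<subseteq> (\<Union>z\<in>Z. ball z (r z))"
    apply (rule compactE_image[OF Kc, of K "\<lambda>z. ball z (r z)"])
      apply simp
    using r apply force
    apply blast
    done
  then obtain Z where Z: "Z \<subseteq> K" "finite Z" "K \<subseteq> (\<Union>z\<in>Z. ball z (r z))" by blast
  have rpos: "r z > 0" if "z \<in> Z" for z using r Z(1) that by auto
  have As: "A z \<in> sets P" if "z \<in> Z" for z using A Z(1) that by auto
  have Adec: "dist (f \<omega> y) p \<le> dist y p - r z" if "z \<in> Z" "\<omega> \<in> A z" "dist z y < 2 * r z" for z \<omega> y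
    using A Z(1) that by blast
  define m where "m = card Z"
  define \<gamma> where "\<gamma> = c / (4 * (m+1))"
  have \<gamma>: "\<gamma> > 0" using c by (simp add: \<gamma>_def)
  have "\<forall>z\<in>Z. \<exists>M. prob {\<omega>\<in>space P. \<exists>k<M. (\<theta>^^k) \<omega> \<in> A z} \<ge> 1 - \<gamma>"
    using hitting \<gamma> A Z(1) by blast
  from bchoice[OF this] obtain Mh where Mh: "\<forall>z\<in>Z. prob {\<omega>\<in>space P. \<exists>k<Mh z. (\<theta>^^k) \<omega> \<in> A z} \<ge> 1 - \<gamma>"
    by blast
  define H where "H z = {\<omega>\<in>space P. \<exists>k<Mh z. (\<theta>^^k) \<omega> \<in> A z}" for z
  have Hs: "H z \<in> sets P" if z: "z \<in> Z" for z
  proof -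
    note As[OF z, measurable]
    show ?thesis unfolding H_def by measurable
  qed
  have HP: "prob (H z) \<ge> 1 - \<gamma>" if "z \<in> Z" for z using Mh that unfolding H_def by blast
  define L where "L = Suc (\<Sum>z\<in>Z. Mh z)"
  have MhL: "Mh z < L" if "z \<in> Z" for z
    unfolding L_def using Z(2) that by (simp add: le_imp_less_Suc member_le_sum)
  have L0: "L > 0" unfolding L_def by simp
  define \<delta>s where "\<delta>s = Min (insert 1 (r ` Z))"
  have \<delta>s0: "\<delta>s > 0" unfolding \<delta>s_def using Z(2) rpos by (subst Min_gr_iff) auto
  have \<delta>sr: "\<delta>s \<le> r z" if "z \<in> Z" for z unfolding \<delta>s_def using Z(2) that by (intro Min_le) auto
  define \<tau> where "\<tau> = \<delta>s / L"
  have \<tau>: "\<tau> > 0" using \<delta>s0 L0 by (simp add: \<tau>_def)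
  define \<beta> where "\<beta> = c / (4 * (m+1) * L)"
  have \<beta>: "\<beta> > 0" using c L0 by (simp add: \<beta>_def)
  obtain d Q where d: "d > 0" and Qs: "Q \<in> sets P" and PQ: "prob Q \<ge> 1 - \<beta>"
    and dQ: "\<And>\<omega> y. \<omega> \<in> Q \<Longrightarrow> dist y p \<le> R \<Longrightarrow> dist y p - dist (f \<omega> y) p < d \<Longrightarrow> dist (f \<omega> y) y < \<tau>"
    using disp_unif[OF p \<tau> \<beta>, of R] by blast
  define In where "In z n = {\<omega>\<in>space P. dist z (Y n \<omega>) < r z}" for z n
  define Hn where "Hn z n = (\<theta>^^n) -` H z \<inter> space P" for z n
  define Dec where "Dec j = {\<omega>\<in>space P. d \<le> dist (Y j \<omega>) p - dist (Y (Suc j) \<omega>) p}" for j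
  define Qc where "Qc j = (\<theta>^^j) -` (space P - Q) \<inter> space P" for j
  define Far where "Far n = (\<Union>i<L. Dec (n+i) \<union> Qc (n+i))" for n
  define Gd where "Gd z n = In z n \<inter> Hn z n - Far n" for z n
  have Ins: "In z n \<in> sets P" for z n unfolding In_def Y_def by measurable
  have Hns: "Hn z n \<in> sets P" if "z \<in> Z" for z n
    unfolding Hn_def by (rule measurable_sets[OF \<theta>n_meas Hs[OF that]])
  have Decs: "Dec j \<in> sets P" for j unfolding Dec_def Y_def by measurable
  have Qcs: "Qc j \<in> sets P" for j unfolding Qc_def by (rule measurable_sets[OF \<theta>n_meas]) (use Qs in auto)
  have Fars: "Far n \<in> sets P" for n unfolding Far_def using Decs Qcs by auto
  have Gds: "Gd z n \<in> sets P" if "z \<in> Z" for z n using Ins Hns[OF that] Fars by (auto simp: Gd_def)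

  have Pfar: "dist (Y (n+j) \<omega>) (Y n \<omega>) \<le> j * \<tau>" if g: "good \<omega>" and nf: "\<omega> \<notin> Far n" and jL: "j \<le> L"
    for \<omega> n j
    using jL
  proof (induction j)
    case 0 then show ?case by simp
  next
    case (Suc j)
    then have jl: "j < L" by simp
    have sp: "\<omega> \<in> space P" using g good_def by blast
    have "\<omega> \<notin> Dec (n+j)" "\<omega> \<notin> Qc (n+j)" using nf jl unfolding Far_def by auto
    then have dd: "dist (Y (n+j) \<omega>) p - dist (Y (Suc (n+j)) \<omega>) p < d" and qq: "(\<theta>^^(n+j)) \<omega> \<in> Q"
      using sp \<theta>n_space[OF sp, of "n+j"] unfolding Dec_def Qc_def by auto
    have "dist (Y (Suc (n+j)) \<omega>) (Y (n+j) \<omega>) < \<tau>"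
      using dQ[OF qq YR[OF g] dd[unfolded YSuc]] by (simp add: YSuc)
    moreover have "dist (Y (Suc (n+j)) \<omega>) (Y n \<omega>) \<le> dist (Y (Suc (n+j)) \<omega>) (Y (n+j) \<omega>) + dist (Y (n+j) \<omega>) (Y n \<omega>)"
      by (rule dist_triangle)
    moreover have "dist (Y (n+j) \<omega>) (Y n \<omega>) \<le> j * \<tau>" using Suc.IH jl by simp
    ultimately show ?case by (simp add: algebra_simps)
  qed

  have P2: "r z \<le> dist (Y n \<omega>) p - dist (Y (n+L) \<omega>) p" if g: "good \<omega>" and z: "z \<in> Z" and om: "\<omega> \<in> Gd z n"
    for \<omega> z n
  proof -
    have inz: "dist z (Y n \<omega>) < r z" and nf: "\<omega> \<notin> Far n" and hh: "(\<theta>^^n) \<omega> \<in> H z"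
      using om unfolding Gd_def In_def Hn_def by auto
    then obtain k where k: "k < Mh z" "(\<theta>^^k) ((\<theta>^^n) \<omega>) \<in> A z" unfolding H_def by auto
    have kA: "(\<theta>^^(n+k)) \<omega> \<in> A z" using k(2) by (metis funpow_add comp_apply add.commute)
    have kL: "k < L" using k(1) MhL[OF z] by linarith
    have "dist (Y (n+k) \<omega>) (Y n \<omega>) \<le> k * \<tau>" using Pfar[OF g nf] kL by simp
    also have "\<dots> \<le> L * \<tau>" using kL \<tau> by (simp add: mult_right_mono)
    also have "\<dots> = \<delta>s" unfolding \<tau>_def using L0 by simp
    also have "\<dots> \<le> r z" using \<delta>sr[OF z] .
    finally have "dist (Y (n+k) \<omega>) (Y n \<omega>) \<le> r z" .
    then have "dist z (Y (n+k) \<omega>) < 2 * r z"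
      using inz dist_triangle[of z "Y (n+k) \<omega>" "Y n \<omega>"] by (simp add: dist_commute)
    then have "dist (Y (Suc (n+k)) \<omega>) p \<le> dist (Y (n+k) \<omega>) p - r z"
      using Adec[OF z kA] by (simp add: YSuc)
    moreover have "dist (Y (n+L) \<omega>) p \<le> dist (Y (Suc (n+k)) \<omega>) p" using Ydec[OF g] kL by simp
    moreover have "dist (Y (n+k) \<omega>) p \<le> dist (Y n \<omega>) p" using Ydec[OF g] by simp
    ultimately show ?thesis by linarith
  qed

  have P4: "(\<Sum>n<N. dist (Y (i+n) \<omega>) p - dist (Y (Suc (i+n)) \<omega>) p) \<le> R" if g: "good \<omega>" for \<omega> i N
  proof -
    have "(\<Sum>n<N. dist (Y (i+n) \<omega>) p - dist (Y (Suc (i+n)) \<omega>) p) = dist (Y i \<omega>) p - dist (Y (i+N) \<omega>) p"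
      using sum_lessThan_telescope'[of "\<lambda>n. dist (Y (i+n) \<omega>) p" N] by simp
    also have "\<dots> \<le> R" using YR[OF g, of i] zero_le_dist[of "Y (i+N) \<omega>" p] by linarith
    finally show ?thesis .
  qed

  have P3: "(\<Sum>n<N. dist (Y n \<omega>) p - dist (Y (n+L) \<omega>) p) \<le> real L * R" if g: "good \<omega>" for \<omega> N
  proof -
    have "(\<Sum>n<N. dist (Y n \<omega>) p - dist (Y (n+L) \<omega>) p)
        = (\<Sum>n<N. \<Sum>k<L. dist (Y (k+n) \<omega>) p - dist (Y (Suc (k+n)) \<omega>) p)"
    proof (rule sum.cong[OF refl])
      fix n show "dist (Y n \<omega>) p - dist (Y (n+L) \<omega>) p = (\<Sum>k<L. dist (Y (k+n) \<omega>) p - dist (Y (Suc (k+n)) \<omega>) p)"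
        using sum_lessThan_telescope'[of "\<lambda>k. dist (Y (k+n) \<omega>) p" L] by (simp add: add.commute)
    qed
    also have "\<dots> = (\<Sum>k<L. \<Sum>n<N. dist (Y (k+n) \<omega>) p - dist (Y (Suc (k+n)) \<omega>) p)" by (rule sum.swap)
    also have "\<dots> \<le> (\<Sum>k<L. R)" by (rule sum_mono) (rule P4[OF g])
    also have "\<dots> = real L * R" by simp
    finally show ?thesis .
  qed

  have Q1: "c \<le> (\<Sum>z\<in>Z. prob (In z n))" for n
  proof -
    have AEi: "AE \<omega> in P. indicator E \<omega> \<le> (\<Sum>z\<in>Z. indicator (In z n) \<omega> :: real)"
      using AE_good
    proof eventually_elim
      case (elim \<omega>)
      show ?case
      proof (cases "\<omega> \<in> E")
        case False then show ?thesis by (simp add: sum_nonneg)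
      next
        case True
        have "Y n \<omega> \<in> K" using True YR[OF elim] unfolding E_def K_def by auto
        then obtain z where z: "z \<in> Z" "dist z (Y n \<omega>) < r z" using Z(3) by auto
        have sp: "\<omega> \<in> space P" using True E_def by auto
        have "1 \<le> (indicator (In z n) \<omega> :: real)" using z sp by (simp add: In_def)
        also have "\<dots> \<le> (\<Sum>z\<in>Z. indicator (In z n) \<omega> :: real)"
          by (rule member_le_sum) (use z Z(2) in auto)
        finally show ?thesis using True by simp
      qed
    qed
    have "prob E \<le> (\<Sum>z\<in>Z. prob (In z n))" by (rule prob_le_sum_AE[OF Z(2) Es _ AEi]) (rule Ins)
    then show ?thesis unfolding c_def .
  qed

  have Q2: "prob (In z n) \<le> prob (Gd z n) + \<gamma> + prob (Far n)" if z: "z \<in> Z" for z n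
  proof -
    have "In z n \<subseteq> (Gd z n \<union> (space P - Hn z n)) \<union> Far n" unfolding Gd_def In_def by auto
    then have 1: "prob (In z n) \<le> prob ((Gd z n \<union> (space P - Hn z n)) \<union> Far n)"
      using Gds[OF z] Hns[OF z] Fars by (intro finite_measure_mono) auto
    have 2: "prob ((Gd z n \<union> (space P - Hn z n)) \<union> Far n) \<le> prob (Gd z n \<union> (space P - Hn z n)) + prob (Far n)"
      using Gds[OF z] Hns[OF z] Fars by (intro measure_Un_le) auto
    have 3: "prob (Gd z n \<union> (space P - Hn z n)) \<le> prob (Gd z n) + prob (space P - Hn z n)"
      using Gds[OF z] Hns[OF z] by (intro measure_Un_le) auto
    have "prob (Hn z n) = prob (H z)" unfolding Hn_def by (rule \<theta>n_prob[OF Hs[OF z]])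
    then have 4: "prob (space P - Hn z n) \<le> \<gamma>" using prob_compl[OF Hns[OF z, of n]] HP[OF z] by linarith
    show ?thesis using 1 2 3 4 by linarith
  qed

  have Q3: "(\<Sum>n<N. prob (Gd z n)) \<le> real L * R / r z" if z: "z \<in> Z" for z N
  proof (rule count_bound)
    show "Gd z n \<in> sets P" for n by (rule Gds[OF z])
    show "r z > 0" by (rule rpos[OF z])
    show "AE \<omega> in P. r z * (\<Sum>n<N. indicator (Gd z n) \<omega>) \<le> real L * R"
      using AE_good
    proof eventually_elim
      case (elim \<omega>)
      have "r z * (\<Sum>n<N. indicator (Gd z n) \<omega>) = (\<Sum>n<N. r z * indicator (Gd z n) \<omega>)"
        by (simp add: sum_distrib_left)
      also have "\<dots> \<le> (\<Sum>n<N. dist (Y n \<omega>) p - dist (Y (n+L) \<omega>) p)"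
      proof (rule sum_mono)
        fix n show "r z * indicator (Gd z n) \<omega> \<le> dist (Y n \<omega>) p - dist (Y (n+L) \<omega>) p"
          using P2[OF elim z, of n] Ydec[OF elim, of n "n+L"] by (auto simp: indicator_def)
      qed
      also have "\<dots> \<le> real L * R" by (rule P3[OF elim])
      finally show ?case .
    qed
  qed

  have Q5: "(\<Sum>n<N. prob (Dec (i+n))) \<le> R / d" for i N
  proof (rule count_bound)
    show "Dec (i+n) \<in> sets P" for n by (rule Decs)
    show "d > 0" by (rule d)
    show "AE \<omega> in P. d * (\<Sum>n<N. indicator (Dec (i+n)) \<omega>) \<le> R"
      using AE_good
    proof eventually_elim
      case (elim \<omega>)
      have "d * (\<Sum>n<N. indicator (Dec (i+n)) \<omega>) = (\<Sum>n<N. d * indicator (Dec (i+n)) \<omega>)"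
        by (simp add: sum_distrib_left)
      also have "\<dots> \<le> (\<Sum>n<N. dist (Y (i+n) \<omega>) p - dist (Y (Suc (i+n)) \<omega>) p)"
      proof (rule sum_mono)
        fix n show "d * indicator (Dec (i+n)) \<omega> \<le> dist (Y (i+n) \<omega>) p - dist (Y (Suc (i+n)) \<omega>) p"
          using Ydec[OF elim, of "i+n" "Suc (i+n)"] by (auto simp: indicator_def Dec_def)
      qed
      also have "\<dots> \<le> R" by (rule P4[OF elim])
      finally show ?case .
    qed
  qed

  have Q4: "prob (Far n) \<le> (\<Sum>i<L. prob (Dec (n+i)) + \<beta>)" for n
  proof -
    have "prob (Far n) \<le> (\<Sum>i<L. prob (Dec (n+i) \<union> Qc (n+i)))"
      unfolding Far_def by (rule measure_UNION_le) (use Decs Qcs in auto)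
    also have "\<dots> \<le> (\<Sum>i<L. prob (Dec (n+i)) + \<beta>)"
    proof (rule sum_mono)
      fix i
      have "prob (Dec (n+i) \<union> Qc (n+i)) \<le> prob (Dec (n+i)) + prob (Qc (n+i))"
        by (rule measure_Un_le) (use Decs Qcs in auto)
      moreover have "prob (Qc (n+i)) = prob (space P - Q)" unfolding Qc_def by (rule \<theta>n_prob) (use Qs in auto)
      moreover have "prob (space P - Q) \<le> \<beta>" using prob_compl[OF Qs] PQ by linarith
      ultimately show "prob (Dec (n+i) \<union> Qc (n+i)) \<le> prob (Dec (n+i)) + \<beta>" by linarith
    qed
    finally show ?thesis .
  qed

  have SF: "(\<Sum>n<N. prob (Far n)) \<le> real N * real L * \<beta> + real L * R / d" for N
  proof -
    have "(\<Sum>n<N. prob (Far n)) \<le> (\<Sum>n<N. \<Sum>i<L. prob (Dec (n+i)) + \<beta>)" by (rule sum_mono) (rule Q4)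
    also have "\<dots> = (\<Sum>n<N. \<Sum>i<L. prob (Dec (n+i))) + real N * real L * \<beta>"
      by (simp add: sum.distrib)
    also have "(\<Sum>n<N. \<Sum>i<L. prob (Dec (n+i))) = (\<Sum>i<L. \<Sum>n<N. prob (Dec (n+i)))" by (rule sum.swap)
    also have "\<dots> \<le> (\<Sum>i<L. R / d)"
    proof (rule sum_mono)
      fix i show "(\<Sum>n<N. prob (Dec (n+i))) \<le> R / d" using Q5[of i N] by (simp add: add.commute)
    qed
    also have "\<dots> = real L * R / d" by simp
    finally show ?thesis by simp
  qed

  define K0 where "K0 = (\<Sum>z\<in>Z. real L * R / r z) + real m * (real L * R / d)"
  have main: "real N * c \<le> K0 + real N * (c/2)" for N
  proof -
    have "real N * c = (\<Sum>n<N. c)" by simp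
    also have "\<dots> \<le> (\<Sum>n<N. \<Sum>z\<in>Z. prob (In z n))" by (rule sum_mono) (rule Q1)
    also have "\<dots> = (\<Sum>z\<in>Z. \<Sum>n<N. prob (In z n))" by (rule sum.swap)
    also have "\<dots> \<le> (\<Sum>z\<in>Z. \<Sum>n<N. prob (Gd z n) + \<gamma> + prob (Far n))"
      by (intro sum_mono Q2) 
    also have "\<dots> = (\<Sum>z\<in>Z. (\<Sum>n<N. prob (Gd z n)) + real N * \<gamma> + (\<Sum>n<N. prob (Far n)))"
      by (simp add: sum.distrib)
    also have "\<dots> \<le> (\<Sum>z\<in>Z. real L * R / r z + real N * \<gamma> + (real N * real L * \<beta> + real L * R / d))"
      by (intro sum_mono add_mono Q3 SF order_refl)
    also have "\<dots> = (\<Sum>z\<in>Z. real L * R / r z) + real m * (real N * \<gamma> + real N * real L * \<beta> + real L * R / d)"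
      by (simp add: sum.distrib m_def algebra_simps)
    also have "\<dots> = K0 + real N * (real m * \<gamma> + real m * (real L * \<beta>))"
      by (simp add: K0_def algebra_simps)
    also have "\<dots> \<le> K0 + real N * (c/2)"
    proof -
      have "real m * \<gamma> \<le> c/4" using c unfolding \<gamma>_def by (simp add: field_simps)
      moreover have "real L * \<beta> = \<gamma>" using L0 unfolding \<beta>_def \<gamma>_def by simp
      ultimately have "real m * \<gamma> + real m * (real L * \<beta>) \<le> c/2" by (simp add: mult.commute)
      then show ?thesis by (intro add_left_mono mult_left_mono) auto
    qed
    finally show ?thesis .
  qed
  obtain N :: nat where N: "2 * K0 / c < N" using reals_Archimedean2 by blast
  have "real N * c \<le> K0 + real N * (c/2)" by (rule main)
  moreover have "2 * K0 < real N * c" using N c by (simp add: field_simps)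
  ultimately show False by linarith
qed

end


context RI begin

lemma infdist_ge: "A \<noteq> {} \<Longrightarrow> (\<And>q. q \<in> A \<Longrightarrow> a \<le> dist y q) \<Longrightarrow> a \<le> infdist y A"
  unfolding infdist_def by (auto intro: cINF_greatest)

lemma final_conv:
  assumes p: "p \<in> common_fixed P f"
  shows "AE \<omega> in P. \<exists>c \<in> common_fixed P f. (\<lambda>n. rand_iter f \<theta> n \<omega> x) \<longlonglongrightarrow> c"
proof -
  let ?C = "common_fixed P f"
  define Y where "Y n \<omega> = rand_iter f \<theta> n \<omega> x" for n \<omega>
  have cl: "closed ?C" using C_props by blast
  have ne: "?C \<noteq> {}" using p by auto
  have AEj: "AE \<omega> in P. \<forall>j::nat. \<not> (\<forall>n. 1/Suc j \<le> infdist (Y n \<omega>) ?C)"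
    unfolding AE_all_countable
  proof
    fix j :: nat
    have ms: "{\<omega>\<in>space P. \<forall>n. 1/Suc j \<le> infdist (Y n \<omega>) ?C} \<in> sets P"
      unfolding Y_def by measurable
    have "prob {\<omega>\<in>space P. \<forall>n. 1/Suc j \<le> infdist (Y n \<omega>) ?C} = 0"
      using main_zero[OF p, of "1/Suc j" x] by (simp add: Y_def)
    then show "AE \<omega> in P. \<not> (\<forall>n. 1/Suc j \<le> infdist (Y n \<omega>) ?C)"
      using prob_Collect_eq_0[OF ms] by simp
  qed
  show ?thesis using AE_good AEj
  proof eventually_elim
    case (elim \<omega>)
    note g = elim(1)
    have hj: "\<exists>n. infdist (Y n \<omega>) ?C < 1/Suc j" for j using elim(2) by (meson not_le)
    define R where "R = dist x p"
    have mono: "dist (Y n \<omega>) q \<le> dist (Y m \<omega>) q" if "q \<in> ?C" "m \<le> n" for q m n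
      using good_mono[OF g that] by (simp add: Y_def)
    have inK: "Y n \<omega> \<in> cball p R" for n
      using mono[OF p, of 0 n] by (simp add: Y_def R_def dist_commute)
    have "compact (cball p R)" by (rule proper) auto
    then obtain l r where l: "l \<in> cball p R" "strict_mono r" "((\<lambda>n. Y n \<omega>) \<circ> r) \<longlonglongrightarrow> l"
      using seq_compactE[OF compact_imp_seq_compact, of "cball p R" "\<lambda>n. Y n \<omega>"] inK
      by blast
    have lim: "(\<lambda>k. Y (r k) \<omega>) \<longlonglongrightarrow> l" using l(3) by (simp add: comp_def)
    have idm: "infdist (Y n \<omega>) ?C \<le> infdist (Y m \<omega>) ?C" if "m \<le> n" for m n
    proof (rule infdist_ge[OF ne])
      fix q assume q: "q \<in> ?C"
      show "infdist (Y n \<omega>) ?C \<le> dist (Y m \<omega>) q"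
        using infdist_le[OF q, of "Y n \<omega>"] mono[OF q that] by linarith
    qed
    have "infdist l ?C = 0"
    proof (rule ccontr)
      assume "infdist l ?C \<noteq> 0"
      then have e: "infdist l ?C > 0" using infdist_nonneg[of l ?C] by linarith
      define e where "e = infdist l ?C"
      obtain j where j: "inverse (of_nat (Suc j)) < e/2" using reals_Archimedean[of "e/2"] e e_def by auto
      obtain n where n: "infdist (Y n \<omega>) ?C < 1/Suc j" using hj by blast
      obtain no where no: "\<And>k. k \<ge> no \<Longrightarrow> dist (Y (r k) \<omega>) l < e/2"
        using metric_LIMSEQ_D[OF lim, of "e/2"] e e_def by auto
      define k where "k = max no n"
      have "n \<le> r k" using seq_suble[OF l(2), of k] unfolding k_def by linarith
      then have "infdist (Y (r k) \<omega>) ?C < e/2" using idm[of n "r k"] n j by (simp add: inverse_eq_divide)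
      moreover have "dist (Y (r k) \<omega>) l < e/2" using no[of k] unfolding k_def by simp
      moreover have "infdist l ?C \<le> infdist (Y (r k) \<omega>) ?C + dist l (Y (r k) \<omega>)" by (rule infdist_triangle)
      ultimately show False unfolding e_def by (simp add: dist_commute)
    qed
    then have lC: "l \<in> ?C" using in_closed_iff_infdist_zero[OF cl ne] by simp
    have "(\<lambda>n. Y n \<omega>) \<longlonglongrightarrow> l"
    proof (rule metric_LIMSEQ_I)
      fix e :: real assume e: "e > 0"
      obtain no where no: "\<And>k. k \<ge> no \<Longrightarrow> dist (Y (r k) \<omega>) l < e"
        using metric_LIMSEQ_D[OF lim e] by auto
      show "\<exists>no. \<forall>n\<ge>no. dist (Y n \<omega>) l < e"
      proof (intro exI allI impI)
        fix n assume "r no \<le> n"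
        then show "dist (Y n \<omega>) l < e" using mono[OF lC, of "r no" n] no[of no] by linarith
      qed
    qed
    then show ?case using lC unfolding Y_def by blast
  qed
qed

end

theorem theoremB:
  fixes P :: "'a measure" and \<theta> :: "'a \<Rightarrow> 'a" and f :: "'a \<Rightarrow> 'b::metric_space \<Rightarrow> 'b"
  assumes sep: "separable_space (euclidean :: 'b topology)"
    and proper: "\<And>S::'b set. closed S \<Longrightarrow> bounded S \<Longrightarrow> compact S"
    and erg: "ergodic_mpds P \<theta>"
    and para: "\<And>\<omega>. \<omega> \<in> space P \<Longrightarrow> paracontraction (f \<omega>)"
    and meas: "(\<lambda>(\<omega>, x). f \<omega> x) \<in> P \<Otimes>\<^sub>M borel \<rightarrow>\<^sub>M borel"
    and ne: "common_fixed P f \<noteq> {}"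
  shows "\<forall>x. AE \<omega> in P. \<exists>c \<in> common_fixed P f. (\<lambda>n. rand_iter f \<theta> n \<omega> x) \<longlonglongrightarrow> c"
proof
  fix x
  obtain S :: "'b set" where S: "countable S" "closure S = UNIV"
    using sep unfolding separable_space_def by auto
  have "RI P \<theta> f S"
    using erg S proper para meas unfolding ergodic_mpds_def
    by (intro RI.intro RI_axioms.intro) auto
  then interpret RI P \<theta> f S .
  obtain p where "p \<in> common_fixed P f" using ne by blast
  then show "AE \<omega> in P. \<exists>c \<in> common_fixed P f. (\<lambda>n. rand_iter f \<theta> n \<omega> x) \<longlonglongrightarrow> c"
    by (rule final_conv)
qed


end
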